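(* There exist nonempty compact convex sets $C_1, C_2, C_3\subseteq \mathbb{R}^3$ such that for every $\varepsilon\in(0,1]$ there is a unique $\varepsilon$-cycle $\mathbf{u}^\varepsilon=(u_1^\varepsilon,u_2^\varepsilon,u_3^\varepsilon)\in(\mathbb{R}^3)^3$ for $C_1,C_2,C_3$, and moreover the limit $\lim_{\varepsilon\downarrow 0}\mathbf{u}^\varepsilon$ does not exist.
   Context: For a nonempty closed convex set $C\subseteq\mathbb{R}^n$, $\Pi_C(u)$ denotes the (unique) Euclidean projection of $u$ onto $C$, i.e. the point of $C$ closest to $u$. Given nonempty closed convex sets $C_1,\dots,C_m$ and a relaxation parameter $\varepsilon\in(0,1]$, an $\varepsilon$-cycle for $C_1,\dots,C_m$ is an $m$-tuple $(u_1,\dots,u_m)$ satisfying $u_1=u_m+\varepsilon(\Pi_{C_1}(u_m)-u_m)$ and $u_i=u_{i-1}+\varepsilon(\Pi_{C_i}(u_{i-1})-u_{i-1})$ for $i=2,\dots,m$. (These are the limit cycles of the under-relaxed cyclic projection method $u_{n+1}=u_n+\varepsilon(\Pi_{C_{i(n)}}(u_n)-u_n)$ cycling through $C_1,\dots,C_m$.) *)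

theory Defs
  imports "HOL-Analysis.Analysis"
begin

definition proj :: "('a::euclidean_space) set \<Rightarrow> 'a \<Rightarrow> 'a" where
  "proj C u = closest_point C u"

definition relax_step :: "real \<Rightarrow> ('a::euclidean_space) set \<Rightarrow> 'a \<Rightarrow> 'a" where
  "relax_step \<epsilon> C u = u + \<epsilon> *\<^sub>R (proj C u - u)"

definition eps_cycle3 ::
  "real \<Rightarrow> 'a set \<Rightarrow> 'a set \<Rightarrow> 'a set \<Rightarrow> ('a::euclidean_space) \<times> 'a \<times> 'a \<Rightarrow> bool" where
  "eps_cycle3 \<epsilon> C1 C2 C3 u \<longleftrightarrow>
     (case u of (u1, u2, u3) \<Rightarrow>
        u1 = relax_step \<epsilon> C1 u3 \<and> u2 = relax_step \<epsilon> C2 u1 \<and> u3 = relax_step \<epsilon> C3 u2)"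

end

theory Submission
  imports Defs
begin



lemma cp_char:
  fixes C :: "'a::euclidean_space set"
  assumes "convex C" "closed C" "p \<in> C" "\<forall>y\<in>C. inner (a - p) (y - p) \<le> 0"
  shows "closest_point C a = p"
proof -
  have "\<forall>z\<in>C. dist a p \<le> dist a z"
  proof
    fix z assume "z \<in> C"
    then have h: "inner (a - p) (z - p) \<le> 0" using assms(4) by blast
    have "(dist a z)^2 = (dist a p)^2 + (norm (p - z))^2 - 2 * inner (a - p) (z - p)"
      unfolding dist_norm power2_norm_eq_inner
      by (simp add: inner_diff inner_commute algebra_simps)
    then have "(dist a p)^2 \<le> (dist a z)^2" using h by (smt (verit) zero_le_power2)
    then show "dist a p \<le> dist a z" by (simp add: power2_le_iff_abs_le)
  qed
  then show ?thesis using closest_point_unique[OF assms(1-3)] by simp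
qed

lemma cp_firm:
  fixes C :: "'a::euclidean_space set"
  assumes "convex C" "closed C" "C \<noteq> {}"
  shows "inner (closest_point C x - closest_point C y) (closest_point C x - closest_point C y)
     \<le> inner (x - y) (closest_point C x - closest_point C y)"
proof -
  have 1: "inner (x - closest_point C x) (closest_point C y - closest_point C x) \<le> 0"
    by (rule closest_point_dot[OF assms(1,2)]) (rule closest_point_in_set[OF assms(2,3)])
  have 2: "inner (y - closest_point C y) (closest_point C x - closest_point C y) \<le> 0"
    by (rule closest_point_dot[OF assms(1,2)]) (rule closest_point_in_set[OF assms(2,3)])
  show ?thesis using 1 2 by (simp add: inner_diff inner_commute algebra_simps)
qed

lemma relax_key:
  fixes a b :: "'a::real_inner"
  assumes "inner b b \<le> inner a b" "0 < e"
  shows "(norm (a + e *\<^sub>R (b - a)))^2 + e * (2 - e) * (norm (a - b))^2 \<le> (norm a)^2"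
proof -
  have "(norm (a + e *\<^sub>R (b - a)))^2 + e * (2 - e) * (norm (a - b))^2
     = (norm a)^2 - 2 * e * (inner a b - inner b b)"
    unfolding power2_norm_eq_inner
    by (simp add: inner_diff inner_add inner_commute algebra_simps power2_eq_square)
  then show ?thesis using assms by (simp add: mult_nonneg_nonneg)
qed

lemma relax_eq:
  fixes C :: "'a::euclidean_space set"
  assumes "convex C" "closed C" "C \<noteq> {}" "0 < e" "e \<le> 1"
  shows "norm (relax_step e C x - relax_step e C y) \<le> norm (x - y)"
    and "norm (x - y) \<le> norm (relax_step e C x - relax_step e C y) \<Longrightarrow>
         proj C x - proj C y = x - y"
proof -
  let ?a = "x - y" and ?b = "proj C x - proj C y"
  have d: "relax_step e C x - relax_step e C y = ?a + e *\<^sub>R (?b - ?a)"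
    unfolding relax_step_def by (simp add: algebra_simps)
  have k: "(norm (?a + e *\<^sub>R (?b - ?a)))^2 + e * (2 - e) * (norm (?a - ?b))^2 \<le> (norm ?a)^2"
    by (rule relax_key) (use cp_firm[OF assms(1-3)] assms(4) in \<open>auto simp: proj_def\<close>)
  have pos: "0 \<le> e * (2 - e) * (norm (?a - ?b))^2" using assms by simp
  show "norm (relax_step e C x - relax_step e C y) \<le> norm (x - y)"
    using k pos unfolding d by (smt (verit) norm_ge_zero power2_le_iff_abs_le abs_of_nonneg)
  assume "norm (x - y) \<le> norm (relax_step e C x - relax_step e C y)"
  then have "(norm ?a)^2 \<le> (norm (?a + e *\<^sub>R (?b - ?a)))^2" unfolding d
    by (simp add: power_mono)
  then have "e * (2 - e) * (norm (?a - ?b))^2 \<le> 0" using k unfolding d by linarith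
  moreover have "0 < e * (2 - e)" using assms by simp
  ultimately have "(norm (?a - ?b))^2 \<le> 0"
    by (metis mult_le_0_iff not_less zero_le_power2)
  then show "?b = ?a" by simp
qed


lemma cont_F: "continuous_on UNIV (\<lambda>s::real^3. (s$2 - s$3) * sin (s$2 / (s$2 - s$3)))"
proof -
  have "isCont (\<lambda>s::real^3. (s$2 - s$3) * sin (s$2 / (s$2 - s$3))) s" for s
  proof (cases "s$2 = s$3")
    case False
    then show ?thesis by (intro continuous_intros) auto
  next
    case True
    have g: "((\<lambda>q::real^3. \<bar>q$2 - q$3\<bar>) \<longlongrightarrow> 0) (at s)"
    proof -
      have "((\<lambda>q::real^3. \<bar>q$2 - q$3\<bar>) \<longlongrightarrow> \<bar>s$2 - s$3\<bar>) (at s)"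
        by (intro tendsto_intros)
      then show ?thesis using True by simp
    qed
    have "((\<lambda>s::real^3. (s$2 - s$3) * sin (s$2 / (s$2 - s$3))) \<longlongrightarrow> 0) (at s)"
      by (rule Lim_null_comparison[OF _ g])
         (auto simp: abs_mult intro!: always_eventually mult_left_le)
    then show ?thesis using True unfolding isCont_def by simp
  qed
  then show ?thesis by (simp add: continuous_on_eq_continuous_at)
qed


lemma exists_3: "(\<exists>i::3. P i) \<longleftrightarrow> P 1 \<or> P 2 \<or> P 3"
  by (metis exhaust_3)

definition SS :: "(real^3) set" where
  "SS = {s. (s$2)^2 + (s$3)^2 = 1 \<and> \<bar>s$1\<bar> \<le> 1 \<and>
            (s$2 - s$3) * s$1 = (s$2 - s$3) * sin (s$2 / (s$2 - s$3))}"
definition K1 :: "(real^3) set" where "K1 = convex hull SS"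
definition K2 :: "(real^3) set" where "K2 = cbox (vector[-1,0,3]) (vector[1,0,3])"
definition K3 :: "(real^3) set" where "K3 = cbox (vector[-1,3,0]) (vector[1,3,0])"

lemma SS_closed: "closed SS"
  unfolding SS_def
  by (intro closed_Collect_conj closed_Collect_eq closed_Collect_le cont_F)
     (intro continuous_intros)+

lemma SS_bounded: "bounded SS"
proof -
  have "SS \<subseteq> cbox (vector[-1,-1,-1]) (vector[1,1,1])"
  proof
    fix s assume "s \<in> SS"
    then have h: "(s$2)^2 + (s$3)^2 = 1" "\<bar>s$1\<bar> \<le> 1" unfolding SS_def by auto
    have "(s$2)^2 \<le> 1" "(s$3)^2 \<le> 1" using h(1) zero_le_power2[of "s$2"] zero_le_power2[of "s$3"] by linarith+
    then have "\<bar>s$2\<bar> \<le> 1" "\<bar>s$3\<bar> \<le> 1" by (simp_all add: abs_square_le_1)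
    then show "s \<in> cbox (vector[-1,-1,-1]) (vector[1,1,1])"
      using h(2) by (auto simp: mem_box_cart forall_3)
  qed
  then show ?thesis by (rule bounded_subset[OF bounded_cbox])
qed

lemma SS_compact: "compact SS"
  using SS_closed SS_bounded compact_eq_bounded_closed by blast

lemma SS_ne: "vector[sin 1, 1, 0] \<in> SS"
  unfolding SS_def by simp

lemma K1_props: "K1 \<noteq> {}" "compact K1" "convex K1" "closed K1"
  unfolding K1_def using SS_ne SS_compact
  by (auto simp: compact_convex_hull convex_convex_hull compact_imp_closed hull_subset
     dest: hull_subset[THEN subsetD])

lemma K2_props: "K2 \<noteq> {}" "compact K2" "convex K2" "closed K2"
  unfolding K2_def by (auto simp: interval_eq_empty_cart exists_3 forall_3 compact_cbox closed_cbox convex_box)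

lemma K3_props: "K3 \<noteq> {}" "compact K3" "convex K3" "closed K3"
  unfolding K3_def by (auto simp: interval_eq_empty_cart exists_3 forall_3 compact_cbox closed_cbox convex_box)


definition NN :: "real \<Rightarrow> real" where "NN e = sqrt (1 + (1 - e)^2)"
definition TT :: "real \<Rightarrow> real" where "TT e = ((1 - e)^2 + 3 * NN e) / (3 - 3 * e + e^2)"
definition SR :: "real \<Rightarrow> real" where "SR e = (1 - e) * TT e + e"
definition mm :: "real \<Rightarrow> real^3" where "mm e = vector [0, 1 / NN e, (1 - e) / NN e]"
definition pp :: "real \<Rightarrow> real^3" where "pp e = vector [sin (1/e), 1 / NN e, (1 - e) / NN e]"
definition cyc :: "real \<Rightarrow> (real^3) \<times> (real^3) \<times> (real^3)" where
  "cyc e = (vector [sin (1/e), SR e / NN e, SR e * (1 - e) / NN e],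
            vector [sin (1/e), (1 - e) * SR e / NN e, (1 - e) * (SR e * (1 - e)) / NN e + 3 * e],
            vector [sin (1/e), TT e / NN e, TT e * (1 - e) / NN e])"

lemma inner3: "inner (x::real^3) y = x$1 * y$1 + x$2 * y$2 + x$3 * y$3"
  by (simp add: inner_vec_def sum_3)

lemma NN_pos: "NN e > 0" and NN_ge1: "NN e \<ge> 1" and NN_sq: "(NN e)^2 = 1 + (1 - e)^2"
  unfolding NN_def by (auto intro: add_pos_nonneg)

lemma TT_gt1: assumes "0 < e" "e \<le> 1" shows "TT e > 1"
proof -
  have d: "3 - 3 * e + e^2 > 0"
  proof -
    have "e^2 > 0" using assms by simp
    then show ?thesis using assms by linarith
  qed
  have "3 - 3 * e + e^2 < (1 - e)^2 + 3 * NN e" using NN_ge1[of e] assms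
    by (simp add: power2_eq_square algebra_simps)
  then show ?thesis unfolding TT_def using d by simp
qed

lemma TT_eq: assumes "0 < e" "e \<le> 1" shows "TT e = (1 - e)^2 * SR e + 3 * e * NN e"
proof -
  have d: "3 - 3 * e + e^2 > 0"
  proof -
    have "e^2 > 0" using assms by simp
    then show ?thesis using assms by linarith
  qed
  show ?thesis unfolding SR_def TT_def using d assms
    by (simp add: field_simps power2_eq_square)
qed

lemma mm_pp: "inner (mm e) (pp e) = 1"
  using NN_pos[of e] NN_sq[of e]
  by (simp add: inner3 mm_def pp_def field_simps power2_eq_square)

lemma pp_SS: assumes "0 < e" shows "pp e \<in> SS"
proof -
  have n: "NN e > 0" "(NN e)^2 = 1 + (1 - e)^2" using NN_pos NN_sq by auto
  have "1 / NN e - (1 - e) / NN e = e / NN e" using n by (simp add: field_simps)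
  moreover have "(1 / NN e) / (e / NN e) = 1 / e" using n assms by simp
  moreover have "(1 / NN e)^2 + ((1 - e) / NN e)^2 = 1"
  proof -
    have "(1 / NN e)^2 + ((1 - e) / NN e)^2 = (1 + (1 - e)^2) / (NN e)^2"
      by (simp add: power_divide add_divide_distrib)
    moreover have "1 + (1 - e)^2 \<noteq> (0::real)" using zero_le_power2[of "1 - e"] by linarith
    ultimately show ?thesis using n by simp
  qed
  ultimately show ?thesis unfolding SS_def pp_def by simp
qed

lemma inner_mm: "inner (mm e) s = (s$2 + (1 - e) * s$3) / NN e"
  by (simp add: inner3 mm_def add_divide_distrib)

lemma SS_half: assumes "s \<in> SS" shows "inner (mm e) s \<le> 1"
proof -
  have h: "(s$2)^2 + (s$3)^2 = 1" using assms unfolding SS_def by auto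
  have n: "NN e > 0" "(NN e)^2 = 1 + (1 - e)^2" using NN_pos NN_sq by auto
  have "(s$2 + (1 - e) * s$3)^2 \<le> (NN e)^2"
  proof -
    have a1: "(NN e)^2 = (1 + (1 - e)^2) * ((s$2)^2 + (s$3)^2)" using h n(2) by simp
    have a2: "(1 + (1 - e)^2) * ((s$2)^2 + (s$3)^2) - (s$2 + (1 - e) * s$3)^2 = ((1 - e) * s$2 - s$3)^2"
      by (simp add: power2_eq_square algebra_simps)
    have "(NN e)^2 - (s$2 + (1 - e) * s$3)^2 = ((1 - e) * s$2 - s$3)^2"
      using a1 a2 by linarith
    then show ?thesis using zero_le_power2[of "(1 - e) * s$2 - s$3"] by linarith
  qed
  then have "s$2 + (1 - e) * s$3 \<le> NN e"
    using power2_le_imp_le less_imp_le[OF n(1)] by blast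
  then have "(s$2 + (1 - e) * s$3) / NN e \<le> 1" using n(1) by (simp only: divide_le_eq_1_pos)
  then show ?thesis unfolding inner_mm .
qed

lemma K1_half: "y \<in> K1 \<Longrightarrow> inner (mm e) y \<le> 1"
proof -
  have "K1 \<subseteq> {y. inner (mm e) y \<le> 1}"
    unfolding K1_def
    by (rule hull_minimal) (use SS_half convex_halfspace_le in blast)+
  then show "y \<in> K1 \<Longrightarrow> inner (mm e) y \<le> 1" by auto
qed

lemma sq_expand: "((x::real) - a)^2 + (y - b)^2 = (x^2 + y^2) + (a^2 + b^2) - 2 * (x * a + y * b)"
  by (simp add: power2_diff algebra_simps)

lemma SS_face: assumes "0 < e" "s \<in> SS" "inner (mm e) s \<ge> 1" shows "s = pp e"
proof -
  have h: "(s$2)^2 + (s$3)^2 = 1" "(s$2 - s$3) * s$1 = (s$2 - s$3) * sin (s$2 / (s$2 - s$3))"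
    using assms unfolding SS_def by auto
  have n: "NN e > 0" using NN_pos by auto
  have i: "s$2 + (1 - e) * s$3 \<ge> NN e" using assms(3) n unfolding inner_mm
    by (simp add: le_divide_eq_1_pos)
  have q: "(1 / NN e)^2 + ((1 - e) / NN e)^2 = 1"
    using pp_SS[OF assms(1)] unfolding SS_def pp_def by simp
  have l: "s$2 * (1 / NN e) + s$3 * ((1 - e) / NN e) = (s$2 + (1 - e) * s$3) / NN e"
    by (simp add: add_divide_distrib)
  have "(s$2 - 1 / NN e)^2 + (s$3 - (1 - e) / NN e)^2 = 2 - 2 * ((s$2 + (1 - e) * s$3) / NN e)"
    unfolding sq_expand h(1) q l by simp
  also have "\<dots> \<le> 0"
  proof -
    have "(s$2 + (1 - e) * s$3) / NN e \<ge> 1" using i n by (simp add: le_divide_eq_1_pos)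
    then show ?thesis by linarith
  qed
  finally have "(s$2 - 1 / NN e)^2 + (s$3 - (1 - e) / NN e)^2 \<le> 0" .
  then have s23: "s$2 = 1 / NN e" "s$3 = (1 - e) / NN e"
    by (simp_all add: sum_power2_le_zero_iff)
  have "s$2 - s$3 = e / NN e" using s23 n by (simp add: diff_divide_distrib)
  moreover have "e / NN e \<noteq> 0" using assms n by simp
  moreover have "(1 / NN e) / (e / NN e) = 1 / e" using n assms by simp
  ultimately have "s$1 = sin (1/e)" using h(2) s23 by simp
  then show ?thesis using s23 unfolding pp_def by (simp add: vec_eq_iff forall_3)
qed

lemma K1_face: assumes "0 < e" "y \<in> K1" "inner (mm e) y \<ge> 1" shows "y = pp e"
proof -
  define TS where "TS = {y. inner (mm e) y < 1} \<union> {pp e}"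
  have TSi: "x \<in> TS \<longleftrightarrow> inner (mm e) x \<le> 1 \<and> (inner (mm e) x \<ge> 1 \<longrightarrow> x = pp e)" for x
    unfolding TS_def using mm_pp[of e] by auto
  have "convex TS"
    unfolding convex_def
  proof (intro allI impI ballI)
    fix x z :: "real^3" and u v :: real
    assume x: "x \<in> TS" and z: "z \<in> TS" and uv: "0 \<le> u" "0 \<le> v" "u + v = 1"
    have ix: "inner (mm e) x \<le> 1" "inner (mm e) z \<le> 1" using x z TSi by auto
    have l: "inner (mm e) (u *\<^sub>R x + v *\<^sub>R z) = u * inner (mm e) x + v * inner (mm e) z"
      by (simp add: inner_add_right)
    have a1: "u * inner (mm e) x \<le> u" using ix(1) uv(1) by (simp add: mult_left_le)
    have a2: "v * inner (mm e) z \<le> v" using ix(2) uv(2) by (simp add: mult_left_le)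
    have le: "inner (mm e) (u *\<^sub>R x + v *\<^sub>R z) \<le> 1" using l a1 a2 uv(3) by linarith
    have eq: "u *\<^sub>R x + v *\<^sub>R z = pp e" if ge: "inner (mm e) (u *\<^sub>R x + v *\<^sub>R z) \<ge> 1"
    proof -
      have s1: "u * inner (mm e) x = u" using l a1 a2 uv(3) ge by linarith
      have s2: "v * inner (mm e) z = v" using l a1 a2 uv(3) ge by linarith
      have xu: "u *\<^sub>R x = u *\<^sub>R pp e"
      proof (cases "u = 0")
        case False
        then have "inner (mm e) x = 1" using s1 by simp
        then show ?thesis using x TSi by auto
      qed simp
      have zv: "v *\<^sub>R z = v *\<^sub>R pp e"
      proof (cases "v = 0")
        case False
        then have "inner (mm e) z = 1" using s2 by simp
        then show ?thesis using z TSi by auto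
      qed simp
      show ?thesis using xu zv uv(3) by (metis scaleR_add_left scaleR_one)
    qed
    show "u *\<^sub>R x + v *\<^sub>R z \<in> TS" using TSi le eq by blast
  qed
  moreover have "SS \<subseteq> TS" using SS_face[OF assms(1)] SS_half TSi by blast
  ultimately have "K1 \<subseteq> TS" unfolding K1_def by (rule hull_minimal[rotated])
  then show ?thesis using assms(2,3) TSi by auto
qed


definition c1 :: "real \<Rightarrow> real^3" where "c1 e = vector [sin (1/e), SR e / NN e, SR e * (1 - e) / NN e]"
definition c2 :: "real \<Rightarrow> real^3" where "c2 e = vector [sin (1/e), (1 - e) * SR e / NN e, (1 - e) * (SR e * (1 - e)) / NN e + 3 * e]"
definition c3 :: "real \<Rightarrow> real^3" where "c3 e = vector [sin (1/e), TT e / NN e, TT e * (1 - e) / NN e]"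

lemma cyc_eq: "cyc e = (c1 e, c2 e, c3 e)"
  unfolding cyc_def c1_def c2_def c3_def by simp

lemma sin_bd: "\<bar>sin (x::real)\<bar> \<le> 1" by (rule abs_sin_le_one)

lemma proj_K1: assumes "0 < e" "e \<le> 1" shows "proj K1 (c3 e) = pp e"
  unfolding proj_def
proof (rule cp_char)
  show "convex K1" "closed K1" using K1_props by auto
  show "pp e \<in> K1" unfolding K1_def by (rule hull_inc[OF pp_SS[OF assms(1)]])
  have n: "NN e \<noteq> 0" using NN_pos[of e] by simp
  have a2: "TT e / NN e - 1 / NN e = (TT e - 1) * (1 / NN e)" using n by (simp add: field_simps)
  have a3: "TT e * (1 - e) / NN e - (1 - e) / NN e = (TT e - 1) * ((1 - e) / NN e)" using n by (simp add: field_simps)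
  have "(c3 e - pp e) $ i = ((TT e - 1) *\<^sub>R mm e) $ i" for i
  proof -
    have "i = 1 \<or> i = 2 \<or> i = 3" using exhaust_3 by blast
    moreover have "(c3 e - pp e) $ 1 = ((TT e - 1) *\<^sub>R mm e) $ 1"
      by (simp add: c3_def pp_def mm_def)
    moreover have "(c3 e - pp e) $ 2 = ((TT e - 1) *\<^sub>R mm e) $ 2"
      using n by (simp add: c3_def pp_def mm_def field_simps)
    moreover have "(c3 e - pp e) $ 3 = ((TT e - 1) *\<^sub>R mm e) $ 3"
      using n by (simp add: c3_def pp_def mm_def field_simps)
    ultimately show ?thesis by blast
  qed
  then have d: "c3 e - pp e = (TT e - 1) *\<^sub>R mm e" by (simp add: vec_eq_iff)
  show "\<forall>y\<in>K1. inner (c3 e - pp e) (y - pp e) \<le> 0"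
  proof
    fix y assume "y \<in> K1"
    then have "inner (mm e) y \<le> 1" by (rule K1_half)
    moreover have "TT e - 1 > 0" using TT_gt1[OF assms] by simp
    ultimately have "(TT e - 1) * (inner (mm e) y - 1) \<le> 0"
      by (simp add: mult_nonneg_nonpos)
    then show "inner (c3 e - pp e) (y - pp e) \<le> 0"
      unfolding d using mm_pp[of e] by (simp add: inner_diff_right right_diff_distrib)
  qed
qed

lemma proj_K2: shows "proj K2 (c1 e) = vector [sin (1/e), 0, 3]"
  unfolding proj_def
proof (rule cp_char)
  show "convex K2" "closed K2" using K2_props by auto
  show "vector [sin (1/e), 0, 3] \<in> K2" unfolding K2_def
    using sin_bd[of "1/e"] by (auto simp: mem_box_cart forall_3 abs_le_iff)
  show "\<forall>y\<in>K2. inner (c1 e - vector [sin (1/e), 0, 3]) (y - vector [sin (1/e), 0, 3]) \<le> 0"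
    unfolding K2_def by (auto simp: mem_box_cart forall_3 inner3 c1_def)
qed

lemma proj_K3: shows "proj K3 (c2 e) = vector [sin (1/e), 3, 0]"
  unfolding proj_def
proof (rule cp_char)
  show "convex K3" "closed K3" using K3_props by auto
  show "vector [sin (1/e), 3, 0] \<in> K3" unfolding K3_def
    using sin_bd[of "1/e"] by (auto simp: mem_box_cart forall_3 abs_le_iff)
  show "\<forall>y\<in>K3. inner (c2 e - vector [sin (1/e), 3, 0]) (y - vector [sin (1/e), 3, 0]) \<le> 0"
    unfolding K3_def by (auto simp: mem_box_cart forall_3 inner3 c2_def)
qed

lemma alg1: "N \<noteq> 0 \<Longrightarrow> ((1 - e) * T + e) / N = T / N + e * (1 / N - T / N)"
  for N T e :: real by (simp add: field_simps)
lemma alg2: "N \<noteq> 0 \<Longrightarrow> ((1 - e) * T + e) * (1 - e) / N = T * (1 - e) / N + e * ((1 - e) / N - T * (1 - e) / N)"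
  for N T e :: real by (simp add: field_simps)
lemma alg3: "N \<noteq> 0 \<Longrightarrow> (1 - e) * S / N = S / N + e * (0 - S / N)"
  for N S e :: real by (simp add: field_simps)
lemma alg4: "N \<noteq> 0 \<Longrightarrow> (1 - e) * (S * (1 - e)) / N + 3 * e = S * (1 - e) / N + e * (3 - S * (1 - e) / N)"
  for N S e :: real by (simp add: field_simps)
lemma alg5: "N \<noteq> 0 \<Longrightarrow> ((1 - e)^2 * S + 3 * e * N) / N = (1 - e) * S / N + e * (3 - (1 - e) * S / N)"
  for N S e :: real by (simp add: field_simps power2_eq_square)
lemma alg6: "N \<noteq> 0 \<Longrightarrow> ((1 - e)^2 * S + 3 * e * N) * (1 - e) / N =
   (1 - e) * (S * (1 - e)) / N + 3 * e + e * (0 - ((1 - e) * (S * (1 - e)) / N + 3 * e))"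
  for N S e :: real by (simp add: field_simps power2_eq_square)

lemma step1: assumes "0 < e" "e \<le> 1" shows "c1 e = relax_step e K1 (c3 e)"
proof -
  have n: "NN e \<noteq> 0" using NN_pos[of e] by simp
  show ?thesis unfolding relax_step_def proj_K1[OF assms]
    unfolding c1_def c3_def pp_def vec_eq_iff forall_3
    using alg1[OF n, of e "TT e"] alg2[OF n, of e "TT e"] by (simp add: SR_def)
qed

lemma step2: shows "c2 e = relax_step e K2 (c1 e)"
proof -
  have n: "NN e \<noteq> 0" using NN_pos[of e] by simp
  show ?thesis
  unfolding relax_step_def proj_K2 unfolding c1_def c2_def vec_eq_iff forall_3
  using alg3[OF n, of e "SR e"] alg4[OF n, of e "SR e"] by simp
qed

lemma step3: assumes "0 < e" "e \<le> 1" shows "c3 e = relax_step e K3 (c2 e)"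
proof -
  have n: "NN e \<noteq> 0" using NN_pos[of e] by simp
  have e2: "TT e / NN e = (1 - e) * SR e / NN e + e * (3 - (1 - e) * SR e / NN e)"
    unfolding TT_eq[OF assms] by (rule alg5[OF n])
  have e3: "TT e * (1 - e) / NN e = (1 - e) * (SR e * (1 - e)) / NN e + 3 * e + e * (0 - ((1 - e) * (SR e * (1 - e)) / NN e + 3 * e))"
    unfolding TT_eq[OF assms] by (rule alg6[OF n])
  have "c3 e $ i = relax_step e K3 (c2 e) $ i" for i
  proof -
    have "i = 1 \<or> i = 2 \<or> i = 3" using exhaust_3 by blast
    then show ?thesis unfolding relax_step_def proj_K3 unfolding c3_def c2_def
      by (elim disjE) (simp_all only: vector_add_component vector_scaleR_component vector_minus_component vector_3 e2 e3 real_scaleR_def, simp)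
  qed
  then show ?thesis by (simp add: vec_eq_iff)
qed

lemma cyc_ok: assumes "0 < e" "e \<le> 1" shows "eps_cycle3 e K1 K2 K3 (cyc e)"
  unfolding eps_cycle3_def cyc_eq prod.case using step1[OF assms] step2 step3[OF assms] by blast


lemma uniq: assumes "0 < e" "e \<le> 1" "eps_cycle3 e K1 K2 K3 w" shows "w = cyc e"
proof -
  obtain w1 w2 w3 where w: "w = (w1, w2, w3)" by (cases w) auto
  have hw0: "w1 = relax_step e K1 w3 \<and> w2 = relax_step e K2 w1 \<and> w3 = relax_step e K3 w2"
    using assms(3) unfolding w eps_cycle3_def prod.case .
  note hw1 = hw0[THEN conjunct1, symmetric]
  note hw2 = hw0[THEN conjunct2, THEN conjunct1, symmetric]
  note hw3 = hw0[THEN conjunct2, THEN conjunct2, symmetric]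
  note hw = hw1 hw2 hw3
  define u1 where "u1 = c1 e"
  define u2 where "u2 = c2 e"
  define u3 where "u3 = c3 e"
  have hu: "relax_step e K1 u3 = u1" "relax_step e K2 u1 = u2" "relax_step e K3 u2 = u3"
    unfolding u1_def u2_def u3_def
    by (rule step1[OF assms(1,2), symmetric], rule step2[symmetric], rule step3[OF assms(1,2), symmetric])
  note r1 = relax_eq[OF K1_props(3,4,1) assms(1,2)]
  note r2 = relax_eq[OF K2_props(3,4,1) assms(1,2)]
  note r3 = relax_eq[OF K3_props(3,4,1) assms(1,2)]
  have n1: "norm (w1 - u1) \<le> norm (w3 - u3)" using r1(1)[of w3 u3] unfolding hw hu .
  have n2: "norm (w2 - u2) \<le> norm (w1 - u1)" using r2(1)[of w1 u1] unfolding hw hu .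
  have n3: "norm (w3 - u3) \<le> norm (w2 - u2)" using r3(1)[of w2 u2] unfolding hw hu .
  have eq1: "proj K1 w3 - proj K1 u3 = w3 - u3"
    using r1(2)[of w3 u3] n2 n3 unfolding hw hu by linarith
  have eq2: "proj K2 w1 - proj K2 u1 = w1 - u1"
    using r2(2)[of w1 u1] n1 n3 unfolding hw hu by linarith
  define d where "d = w3 - u3"
  have "relax_step e K1 w3 - relax_step e K1 u3 = (w3 - u3) + e *\<^sub>R ((proj K1 w3 - proj K1 u3) - (w3 - u3))"
    unfolding relax_step_def by (simp add: algebra_simps)
  then have d1: "w1 - u1 = d" using eq1 unfolding hw hu d_def by simp
  have pin: "proj K2 w1 \<in> K2" unfolding proj_def by (rule closest_point_in_set[OF K2_props(4,1)])
  then have pw: "proj K2 w1 $ 2 = 0" "proj K2 w1 $ 3 = 3" unfolding K2_def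
    by (auto simp: mem_box_cart forall_3 intro: order_antisym)
  have pu: "proj K2 u1 = vector [sin (1/e), 0, 3]" unfolding u1_def by (rule proj_K2)
  have d23: "d $ 2 = 0" "d $ 3 = 0"
    using arg_cong[OF eq2, of "\<lambda>v. v $ 2"] arg_cong[OF eq2, of "\<lambda>v. v $ 3"] pw pu d1 by auto
  have p1: "proj K1 w3 = pp e + d"
    using eq1 proj_K1[OF assms(1,2)] unfolding d_def u3_def by (simp add: algebra_simps)
  have pin1: "proj K1 w3 \<in> K1" unfolding proj_def by (rule closest_point_in_set[OF K1_props(4,1)])
  have "inner (mm e) (pp e + d) = 1"
    using mm_pp[of e] d23 by (simp add: inner_add_right inner3 mm_def)
  then have "pp e + d = pp e" using K1_face[OF assms(1), of "pp e + d"] pin1 p1 by simp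
  then have d0: "d = 0" by simp
  have e3: "w3 = u3" using d0 unfolding d_def by simp
  have e1: "w1 = u1" using d0 d1 by simp
  have e2: "w2 = u2" using hw(2) hu(2) e1 by metis
  show ?thesis unfolding w cyc_eq using e1 e2 e3 u1_def u2_def u3_def by simp
qed

lemma sin_seq1: "sin (1 / (1 / (pi/2 + 2 * real k * pi))) = 1"
proof -
  have "sin (pi/2 + 2 * real k * pi) = 1" by (simp add: sin_add)
  then show ?thesis by simp
qed

lemma sin_seq2: "sin (1 / (1 / ((pi/2 + pi) + 2 * real k * pi))) = -1"
proof -
  have "sin (pi/2 + pi) = -1" by (subst sin_periodic_pi) simp
  then have "sin ((pi/2 + pi) + 2 * real k * pi) = -1" by (simp add: sin_add)
  then show ?thesis by simp
qed

lemma seq_lim: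
  fixes c :: real assumes "c > 0"
  shows "filterlim (\<lambda>k. 1 / (c + 2 * real k * pi)) (at_right 0) sequentially"
proof (rule tendsto_imp_filterlim_at_right)
  have "filterlim (\<lambda>k. (2 * pi) * real k) at_top sequentially"
    by (rule filterlim_tendsto_pos_mult_at_top[OF tendsto_const]) (simp_all add: filterlim_real_sequentially)
  then have "filterlim (\<lambda>k. c + (2 * pi) * real k) at_top sequentially"
    by (rule filterlim_tendsto_add_at_top[OF tendsto_const])
  then have "((\<lambda>k. inverse (c + (2 * pi) * real k)) \<longlongrightarrow> 0) sequentially"
    by (rule tendsto_inverse_0_at_top)
  then show "((\<lambda>k. 1 / (c + 2 * real k * pi)) \<longlongrightarrow> 0) sequentially"
    by (simp add: inverse_eq_divide mult.commute mult.left_commute)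
  show "\<forall>\<^sub>F k in sequentially. 0 < 1 / (c + 2 * real k * pi)"
    using assms by (intro always_eventually allI) (simp add: add_pos_nonneg)
qed

lemma no_lim: "\<not> (\<exists>l. ((\<lambda>e::real. sin (1 / e)) \<longlongrightarrow> l) (at_right 0))"
proof
  assume "\<exists>l. ((\<lambda>e::real. sin (1 / e)) \<longlongrightarrow> l) (at_right 0)"
  then obtain l where l: "((\<lambda>e::real. sin (1 / e)) \<longlongrightarrow> l) (at_right 0)" by blast
  have "((\<lambda>k. sin (1 / (1 / (pi/2 + 2 * real k * pi)))) \<longlongrightarrow> l) sequentially"
    using filterlim_compose[OF l seq_lim[of "pi/2"]] by simp
  then have "((\<lambda>k. 1) \<longlongrightarrow> l) sequentially" unfolding sin_seq1 .
  then have l1: "l = 1" using LIMSEQ_unique tendsto_const by blast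
  have "((\<lambda>k. sin (1 / (1 / ((pi/2 + pi) + 2 * real k * pi)))) \<longlongrightarrow> l) sequentially"
    using filterlim_compose[OF l seq_lim[of "pi/2 + pi"]] by simp
  then have "((\<lambda>k. -1) \<longlongrightarrow> l) sequentially" unfolding sin_seq2 .
  then have l2: "l = -1" using LIMSEQ_unique tendsto_const by blast
  show False using l1 l2 by simp
qed

theorem theorem1:
  shows "\<exists>C1 C2 C3 :: (real^3) set.
    C1 \<noteq> {} \<and> compact C1 \<and> convex C1 \<and>
    C2 \<noteq> {} \<and> compact C2 \<and> convex C2 \<and>
    C3 \<noteq> {} \<and> compact C3 \<and> convex C3 \<and>
    (\<forall>\<epsilon>::real. 0 < \<epsilon> \<and> \<epsilon> \<le> 1 \<longrightarrow> (\<exists>!u. eps_cycle3 \<epsilon> C1 C2 C3 u)) \<and>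
    \<not> (\<exists>L. ((\<lambda>\<epsilon>. THE u. eps_cycle3 \<epsilon> C1 C2 C3 u) \<longlongrightarrow> L) (at_right 0))"
proof (intro exI conjI)
  show "K1 \<noteq> {}" "compact K1" "convex K1" using K1_props by auto
  show "K2 \<noteq> {}" "compact K2" "convex K2" using K2_props by auto
  show "K3 \<noteq> {}" "compact K3" "convex K3" using K3_props by auto
  have ex1: "\<exists>!u. eps_cycle3 e K1 K2 K3 u" if "0 < e" "e \<le> 1" for e
    using cyc_ok[OF that] uniq[OF that] by blast
  show "\<forall>\<epsilon>::real. 0 < \<epsilon> \<and> \<epsilon> \<le> 1 \<longrightarrow> (\<exists>!u. eps_cycle3 \<epsilon> K1 K2 K3 u)"
    using ex1 by blast
  show "\<not> (\<exists>L. ((\<lambda>\<epsilon>. THE u. eps_cycle3 \<epsilon> K1 K2 K3 u) \<longlongrightarrow> L) (at_right 0))"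
  proof
    assume "\<exists>L. ((\<lambda>\<epsilon>. THE u. eps_cycle3 \<epsilon> K1 K2 K3 u) \<longlongrightarrow> L) (at_right 0)"
    then obtain L where L: "((\<lambda>\<epsilon>. THE u. eps_cycle3 \<epsilon> K1 K2 K3 u) \<longlongrightarrow> L) (at_right (0::real))"
      by blast
    have ev: "\<forall>\<^sub>F e in at_right (0::real). (THE u. eps_cycle3 e K1 K2 K3 u) = cyc e"
      unfolding eventually_at_right[of 0 "1::real", simplified]
    proof (intro exI conjI allI impI)
      fix y :: real assume "0 < y" "y < 1"
      then show "(THE u. eps_cycle3 y K1 K2 K3 u) = cyc y"
        using the1_equality[OF ex1 cyc_ok] by simp
    qed simp
    have "(cyc \<longlongrightarrow> L) (at_right 0)"
      by (rule Lim_transform_eventually[OF L ev])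
    then have "((\<lambda>e. fst (cyc e) $ 1) \<longlongrightarrow> fst L $ 1) (at_right 0)"
      by (intro tendsto_intros)
    then have "((\<lambda>e::real. sin (1 / e)) \<longlongrightarrow> fst L $ 1) (at_right 0)"
      by (simp add: cyc_def)
    then show False using no_lim by blast
  qed
qed

end
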